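(* Let $q$ be an odd prime power, $\omega$ a non-square in $\mathbb F_q$, $\epsilon\in\mathbb F_{q^2}$ with $\epsilon^2=\omega$, and write $z=z_1+\epsilon z_2$ ($z_i\in\mathbb F_q$) for $z\in\mathbb F_{q^2}$. Let $a,b,c,d,e\in\mathbb F_{q^2}$ with $b\ne0$, $b_1d_2=b_2d_1$ and $(b_1,d_1)\ne(0,0)$; put $a'=b_1a_2-a_1b_2$, $c'=b_1c_2-b_2c_1$, $e'=b_1e_2-b_2e_1$, not all zero, $\delta'=c'^2-4a'e'$ and $\kappa=a'd_1^2-c'd_1b_1+e'b_1^2$. In $\mathrm{PG}(3,q)$ with coordinates $(t_1:t_2:X:Z)$ let $\Pi$ be the plane $b_1X+d_1Z=0$, $\mathcal Q$ the quadric $b_2t_1^2-2b_1t_1t_2+b_2\omega t_2^2+a'X^2+c'XZ+e'Z^2=0$, and $\mathcal Q_0$ the set of points of $\mathcal Q$ (in $\mathrm{PG}(3,q)$) with $t_1=t_2=0$. Then $\Pi$ meets $\mathcal Q_0$ if and only if $\kappa=0$, in which case $|\Pi\cap\mathcal Q_0|=1$. Furthermore, when $\delta'=0$, $\Pi\cap\mathcal Q_0$ is the vertex of the quadric cone $\mathcal Q$ if $a'\neq0$, and is empty if $a'=0$. *)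

theory Defs
  imports Main
begin

text \<open>Homogeneous coordinates (t1, t2, X, Z) of PG(3,q) over a field 'a.\<close>
type_synonym 'a vec4 = "'a \<times> 'a \<times> 'a \<times> 'a"

definition vadd4 :: "'a::field vec4 \<Rightarrow> 'a vec4 \<Rightarrow> 'a vec4" where
  "vadd4 v w = (case v of (t1, t2, x, z) \<Rightarrow> case w of (s1, s2, y, u) \<Rightarrow>
      (t1 + s1, t2 + s2, x + y, z + u))"

definition proj_pt :: "'a::field vec4 \<Rightarrow> 'a vec4 set" where
  "proj_pt v = (case v of (t1, t2, x, z) \<Rightarrow>
      {(l * t1, l * t2, l * x, l * z) | l. l \<noteq> 0})"

definition PG3 :: "'a::field vec4 set set" where
  "PG3 = {proj_pt v | v. v \<noteq> (0, 0, 0, 0)}"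

definition proj_zeros :: "('a::field vec4 \<Rightarrow> 'a) \<Rightarrow> 'a vec4 set set" where
  "proj_zeros F = {P \<in> PG3. \<forall>v\<in>P. F v = 0}"

text \<open>Singular points (vertex set) of the quadric defined by the quadratic form F:
  points of the quadric lying in the radical of the polar form.\<close>
definition quadric_sing :: "('a::field vec4 \<Rightarrow> 'a) \<Rightarrow> 'a vec4 set set" where
  "quadric_sing F = {P \<in> PG3. \<forall>v\<in>P. F v = 0 \<and>
      (\<forall>w. F (vadd4 v w) - F v - F w = 0)}"

end

theory Submission imports Defs "HOL-Library.Disjoint_Sets" begin

lemma two_nz:
  assumes "odd (card (UNIV :: 'a::{field,finite} set))"
  shows "(2::'a) \<noteq> 0"
proof
  assume h2: "(2::'a) = 0"
  have "(\<Sum>x\<in>(UNIV::'a set). (1::'a)) = 0"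
    by (rule sum_involution_eq_0[where h="\<lambda>x. x + 1"]) (auto simp: h2 add.assoc one_add_one[symmetric])
  hence "(of_nat (card (UNIV::'a set)) :: 'a) = 0" by simp
  moreover obtain k where "card (UNIV::'a set) = 2*k+1" using assms oddE by blast
  ultimately show False using h2 by simp
qed

lemma proj_pt_mem: "v \<in> proj_pt (t1,t2,x,z) \<longleftrightarrow> (\<exists>l. l \<noteq> 0 \<and> v = (l*t1, l*t2, l*x, l*z))"
  unfolding proj_pt_def by auto

lemma proj_pt_scale:
  assumes "(l::'a::field) \<noteq> 0"
  shows "proj_pt (l*t1, l*t2, l*x, l*z) = proj_pt (t1,t2,x,z)"
proof (rule set_eqI)
  fix v
  show "v \<in> proj_pt (l*t1, l*t2, l*x, l*z) \<longleftrightarrow> v \<in> proj_pt (t1,t2,x,z)"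
    unfolding proj_pt_mem
  proof
    assume "\<exists>m. m \<noteq> 0 \<and> v = (m * (l * t1), m * (l * t2), m * (l * x), m * (l * z))"
    then obtain m where "m \<noteq> 0" "v = (m * (l * t1), m * (l * t2), m * (l * x), m * (l * z))" by blast
    thus "\<exists>m. m \<noteq> 0 \<and> v = (m * t1, m * t2, m * x, m * z)"
      using assms by (intro exI[of _ "m*l"]) (auto simp: mult.assoc)
  next
    assume "\<exists>m. m \<noteq> 0 \<and> v = (m * t1, m * t2, m * x, m * z)"
    then obtain m where "m \<noteq> 0" "v = (m * t1, m * t2, m * x, m * z)" by blast
    thus "\<exists>m. m \<noteq> 0 \<and> v = (m * (l * t1), m * (l * t2), m * (l * x), m * (l * z))"
      using assms by (intro exI[of _ "m/l"]) auto
  qed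
qed

lemma proj_pt_self: "(t1,t2,x,z) \<in> proj_pt (t1,t2,x,z)"
  unfolding proj_pt_def by (auto intro: exI[of _ 1])

lemma PG3_E:
  assumes "P \<in> PG3"
  obtains t1 t2 x z where "(t1,t2,x,z) \<noteq> (0::'a::field,0,0,0)" "P = proj_pt (t1,t2,x,z)"
  using assms unfolding PG3_def by auto

lemma PG3_I: "(t1,t2,x,z) \<noteq> (0::'a::field,0,0,0) \<Longrightarrow> proj_pt (t1,t2,x,z) \<in> PG3"
  unfolding PG3_def by auto

theorem mainTheorem13:
  fixes \<omega> a1 a2 b1 b2 c1 c2 d1 d2 e1 e2 :: "'a::{field,finite}"
  assumes odd_q: "odd (card (UNIV :: 'a set))"
    and nonsq: "\<not> (\<exists>x. x * x = \<omega>)"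
    and b_nz: "(b1, b2) \<noteq> (0, 0)"
    and bd: "b1 * d2 = b2 * d1"
    and bd1: "(b1, d1) \<noteq> (0, 0)"
  defines "a' \<equiv> b1 * a2 - a1 * b2"
    and "c' \<equiv> b1 * c2 - b2 * c1"
    and "e' \<equiv> b1 * e2 - b2 * e1"
  assumes ace: "(a', c', e') \<noteq> (0, 0, 0)"
  defines "\<delta>' \<equiv> c'^2 - 4 * a' * e'"
    and "\<kappa> \<equiv> a' * d1^2 - c' * d1 * b1 + e' * b1^2"
    and "F \<equiv> (\<lambda>(t1, t2, X, Z). b2 * t1^2 - 2 * b1 * t1 * t2 + b2 * \<omega> * t2^2
                 + a' * X^2 + c' * X * Z + e' * Z^2)"
    and "Plane \<equiv> proj_zeros (\<lambda>(t1, t2, X, Z). b1 * X + d1 * Z)"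
  defines "Q \<equiv> proj_zeros F"
  defines "Q0 \<equiv> {P \<in> Q. \<forall>(t1, t2, X, Z)\<in>P. t1 = 0 \<and> t2 = 0}"
  shows "(Plane \<inter> Q0 \<noteq> {} \<longleftrightarrow> \<kappa> = 0)
       \<and> (\<kappa> = 0 \<longrightarrow> card (Plane \<inter> Q0) = 1)
       \<and> (\<delta>' = 0 \<longrightarrow>
            (a' \<noteq> 0 \<longrightarrow> (\<exists>V. quadric_sing F = {V})
                        \<and> Plane \<inter> Q0 \<subseteq> quadric_sing F
                        \<and> (\<kappa> = 0 \<longrightarrow> Plane \<inter> Q0 = quadric_sing F))
          \<and> (a' = 0 \<longrightarrow> Plane \<inter> Q0 = {}))"
proof -
  have two: "(2::'a) \<noteq> 0" using two_nz[OF odd_q] .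
  have b1nz: "b1 \<noteq> 0" using b_nz bd bd1 by auto
  have bw: "b1*b1 \<noteq> b2*b2*\<omega>"
  proof
    assume h: "b1*b1 = b2*b2*\<omega>"
    show False
    proof (cases "b2 = 0")
      case True thus False using h b1nz by simp
    next
      case False
      hence "(b1/b2)*(b1/b2) = \<omega>" using h by (simp add: field_simps)
      thus False using nonsq by blast
    qed
  qed
  have Fv: "F (t1,t2,x,z) = b2 * t1^2 - 2 * b1 * t1 * t2 + b2 * \<omega> * t2^2
                 + a' * x^2 + c' * x * z + e' * z^2" for t1 t2 x z
    unfolding F_def by simp
  define W where "W = proj_pt (0::'a, 0::'a, d1, -b1)"
  have PQ: "Plane \<inter> Q0 = (if \<kappa> = 0 then {W} else {})"
  proof (rule set_eqI)
    fix P
    show "P \<in> Plane \<inter> Q0 \<longleftrightarrow> P \<in> (if \<kappa> = 0 then {W} else {})"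
    proof
      assume P: "P \<in> Plane \<inter> Q0"
      hence "P \<in> PG3" unfolding Plane_def proj_zeros_def by auto
      then obtain t1 t2 x z where nz: "(t1,t2,x,z) \<noteq> (0,0,0,0)" and Pe: "P = proj_pt (t1,t2,x,z)"
        by (rule PG3_E)
      have vP: "(t1,t2,x,z) \<in> P" using Pe proj_pt_self by simp
      have t0: "t1 = 0" "t2 = 0" using P vP unfolding Q0_def by auto
      have pl: "b1 * x + d1 * z = 0" using P vP unfolding Plane_def proj_zeros_def by auto
      have fq: "F (t1,t2,x,z) = 0" using P vP unfolding Q0_def Q_def proj_zeros_def by auto
      define l where "l = - z / b1"
      have xl: "x = l * d1" using pl b1nz unfolding l_def by (simp add: field_simps) (metis add.commute add_eq_0_iff mult.commute)
      have zl: "z = l * (-b1)" using b1nz unfolding l_def by simp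
      have lnz: "l \<noteq> 0" using nz t0 xl zl by auto
      have "l^2 * \<kappa> = 0" using fq unfolding Fv t0 xl zl \<kappa>_def by (simp add: power2_eq_square algebra_simps)
      hence k0: "\<kappa> = 0" using lnz by simp
      have "P = W" unfolding Pe W_def using proj_pt_scale[OF lnz, of 0 0 d1 "-b1"] t0 xl zl by simp
      thus "P \<in> (if \<kappa> = 0 then {W} else {})" using k0 by simp
    next
      assume "P \<in> (if \<kappa> = 0 then {W} else {})"
      hence k0: "\<kappa> = 0" and PW: "P = W" by (auto split: if_splits)
      have "W \<in> PG3" unfolding W_def using b1nz by (intro PG3_I) auto
      moreover have "\<forall>v\<in>W. (case v of (t1, t2, X, Z) \<Rightarrow> b1 * X + d1 * Z) = 0"
      proof
        fix v assume "v \<in> W"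
        then obtain m where "v = (m*0, m*0, m*d1, m*(-b1))" unfolding W_def proj_pt_mem by blast
        thus "(case v of (t1, t2, X, Z) \<Rightarrow> b1 * X + d1 * Z) = 0" by (simp add: algebra_simps)
      qed
      moreover have "\<forall>v\<in>W. F v = 0"
      proof
        fix v assume "v \<in> W"
        then obtain m where "v = (m*0, m*0, m*d1, m*(-b1))" unfolding W_def proj_pt_mem by blast
        hence "F v = m^2 * \<kappa>" unfolding \<kappa>_def by (simp add: Fv power2_eq_square algebra_simps)
        thus "F v = 0" using k0 by simp
      qed
      moreover have "\<forall>v\<in>W. case v of (t1, t2, X, Z) \<Rightarrow> t1 = 0 \<and> t2 = 0"
        unfolding W_def by (auto simp: proj_pt_mem)
      ultimately show "P \<in> Plane \<inter> Q0" unfolding PW Plane_def Q0_def Q_def proj_zeros_def by auto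
    qed
  qed
  have Bv: "F (vadd4 (t1,t2,x,z) (s1,s2,y,u)) - F (t1,t2,x,z) - F (s1,s2,y,u) =
     2*b2*t1*s1 - 2*b1*(t1*s2+s1*t2) + 2*b2*\<omega>*t2*s2 + 2*a'*x*y + c'*(x*u+y*z) + 2*e'*z*u"
    for t1 t2 x z s1 s2 y u
    by (simp add: Fv vadd4_def power2_eq_square algebra_simps)
  define V where "V = proj_pt (0::'a, 0::'a, -c', 2*a')"
  have SING: "quadric_sing F = {V}" if d0: "\<delta>' = 0" and a0: "a' \<noteq> 0"
  proof (rule set_eqI)
    have dd: "c'^2 = 4*a'*e'" using d0 unfolding \<delta>'_def by simp
    fix P
    show "P \<in> quadric_sing F \<longleftrightarrow> P \<in> {V}"
    proof
      assume P: "P \<in> quadric_sing F"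
      hence "P \<in> PG3" unfolding quadric_sing_def by auto
      then obtain t1 t2 x z where nz: "(t1,t2,x,z) \<noteq> (0,0,0,0)" and Pe: "P = proj_pt (t1,t2,x,z)"
        by (rule PG3_E)
      have vP: "(t1,t2,x,z) \<in> P" using Pe proj_pt_self by simp
      have B0: "F (vadd4 (t1,t2,x,z) w) - F (t1,t2,x,z) - F w = 0" for w
        using P vP unfolding quadric_sing_def by blast
      have h1: "2*(b2*t1 - b1*t2) = 0" using B0[of "(1,0,0,0)"] unfolding Bv by (simp add: algebra_simps)
      have h2: "2*(b1*t1 - b2*\<omega>*t2) = 0" using B0[of "(0,1,0,0)"] unfolding Bv by (simp add: algebra_simps) (metis eq_commute)
      have h3: "2*a'*x + c'*z = 0" using B0[of "(0,0,1,0)"] unfolding Bv by (simp add: algebra_simps)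
      have g1: "b2*t1 = b1*t2" using h1 two by simp
      have g2: "b1*t1 = b2*\<omega>*t2" using h2 two by simp
      have "(b1*b1 - b2*b2*\<omega>)*t2 = 0"
      proof -
        have "b1*(b1*t2) = b1*(b2*t1)" using g1 by simp
        also have "\<dots> = b2*(b1*t1)" by (simp add: algebra_simps)
        also have "\<dots> = b2*b2*\<omega>*t2" using g2 by (simp add: algebra_simps)
        finally show ?thesis by (simp add: algebra_simps)
      qed
      hence t2: "t2 = 0" using bw by simp
      hence t1: "t1 = 0" using g2 b1nz by simp
      define l where "l = z / (2*a')"
      have a2: "2*a' \<noteq> 0" using two a0 by simp
      have zl: "z = l*(2*a')" unfolding l_def using a2 by simp
      have xl: "x = l*(-c')" unfolding l_def using h3 a2 by (simp add: field_simps) (metis add.commute add_eq_0_iff mult.commute)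
      have lnz: "l \<noteq> 0" using nz t1 t2 xl zl by auto
      have "P = V" unfolding Pe V_def using proj_pt_scale[OF lnz, of 0 0 "-c'" "2*a'"] t1 t2 xl zl by simp
      thus "P \<in> {V}" by simp
    next
      assume "P \<in> {V}"
      hence PV: "P = V" by simp
      have a2: "2*a' \<noteq> 0" using two a0 by simp
      have "V \<in> PG3" unfolding V_def using a2 by (intro PG3_I) auto
      moreover have "\<forall>v\<in>V. F v = 0 \<and> (\<forall>w. F (vadd4 v w) - F v - F w = 0)"
      proof
        fix v assume "v \<in> V"
        then obtain m where v: "v = (m*0, m*0, m*(-c'), m*(2*a'))" unfolding V_def proj_pt_mem by blast
        have "F v = -(m^2 * a' * (c'^2 - 4*a'*e'))" unfolding v Fv by (simp add: power2_eq_square algebra_simps)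
        hence "F v = 0" using dd by simp
        moreover have "F (vadd4 v w) - F v - F w = 0" for w
        proof -
          obtain s1 s2 y u where w: "w = (s1,s2,y,u)" by (cases w) auto
          have "F (vadd4 v w) - F v - F w = -(m * u * (c'^2 - 4*a'*e'))"
            unfolding v w Bv by (simp add: power2_eq_square algebra_simps)
          thus ?thesis using dd by simp
        qed
        ultimately show "F v = 0 \<and> (\<forall>w. F (vadd4 v w) - F v - F w = 0)" by blast
      qed
      ultimately show "P \<in> quadric_sing F" unfolding PV quadric_sing_def by blast
    qed
  qed
  have WV: "W = V" if d0: "\<delta>' = 0" and a0: "a' \<noteq> 0" and k0: "\<kappa> = 0"
  proof -
    have "4*a'*\<kappa> = (2*a'*d1 - c'*b1)^2 + (4*a'*e' - c'^2)*b1^2"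
      unfolding \<kappa>_def by (simp add: power2_eq_square algebra_simps)
    hence "(2*a'*d1 - c'*b1)^2 = 0" using d0 k0 unfolding \<delta>'_def by simp
    hence e: "2*a'*d1 = c'*b1" by simp
    define l where "l = -2*a'/b1"
    have lnz: "l \<noteq> 0" unfolding l_def using two a0 b1nz by simp
    have "l*d1 = -c'" unfolding l_def using e b1nz by (simp add: field_simps)
    moreover have "l*(-b1) = 2*a'" unfolding l_def using b1nz by simp
    ultimately show ?thesis unfolding W_def V_def using proj_pt_scale[OF lnz, of 0 0 d1 "-b1"] by simp
  qed
  have A0: "Plane \<inter> Q0 = {}" if d0: "\<delta>' = 0" and a0: "a' = 0"
  proof -
    have "c' = 0" using d0 a0 unfolding \<delta>'_def by simp
    hence "e' \<noteq> 0" using ace a0 by simp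
    hence "\<kappa> \<noteq> 0" unfolding \<kappa>_def using a0 \<open>c' = 0\<close> b1nz by simp
    thus ?thesis using PQ by simp
  qed
  show ?thesis
  proof (intro conjI impI)
    show "Plane \<inter> Q0 \<noteq> {} \<longleftrightarrow> \<kappa> = 0" using PQ by simp
    show "\<kappa> = 0 \<Longrightarrow> card (Plane \<inter> Q0) = 1" using PQ by simp
  next
    assume d0: "\<delta>' = 0" and a0: "a' \<noteq> 0"
    show "\<exists>V. quadric_sing F = {V}" using SING[OF d0 a0] by blast
    show "Plane \<inter> Q0 \<subseteq> quadric_sing F" using SING[OF d0 a0] PQ WV[OF d0 a0] by auto
    show "\<kappa> = 0 \<Longrightarrow> Plane \<inter> Q0 = quadric_sing F" using SING[OF d0 a0] PQ WV[OF d0 a0] by auto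
  next
    show "\<delta>' = 0 \<Longrightarrow> a' = 0 \<Longrightarrow> Plane \<inter> Q0 = {}" using A0 by blast
  qed
qed

end
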